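(* Under the Kahan map $\mathcal K$ with step size $2\epsilon$ of the generalized Lotka–Volterra system, the functions $v_j$ transform as $\tilde v_j=v_j\dfrac{1+\epsilon H}{1-\epsilon H+2\epsilon v_j}$ for $j=1,\dots,n$, where $\tilde v_j:=a_1\tilde x_1+\dots+a_j\tilde x_j$; in particular $\tilde H=H$.
   Context: $(a_1,\dots,a_n)\in\mathbb R^n\setminus\{0\}$, $H=a_1x_1+\dots+a_nx_n$, $v_0:=0$, $v_i:=a_1x_1+\dots+a_ix_i$. The Kahan map with step size $2\epsilon$ is the map $x\mapsto\tilde x$ implicitly defined by $\tilde x_i-x_i=\epsilon\,x_i(H-\tilde v_i-\tilde v_{i-1})+\epsilon\,\tilde x_i(H-v_i-v_{i-1})$ ($i=1,\dots,n$), with $\tilde v_i$ as defined and $\tilde v_0=0$; this is the Kahan discretization (with step $2\epsilon$) of $\dot x_i=x_i(H-v_i-v_{i-1})$, which equals $\dot x_i=x_i\big(\sum_{j>i}a_jx_j-\sum_{j<i}a_jx_j\big)$. *)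

theory Defs
  imports Complex_Main
begin

text \<open>Vectors in R^n are represented as functions nat => real, only the
components with index in {1..n} matter.\<close>

definition vsum :: "(nat \<Rightarrow> real) \<Rightarrow> (nat \<Rightarrow> real) \<Rightarrow> nat \<Rightarrow> real" where
  "vsum a x j = (\<Sum>k=1..j. a k * x k)"

definition Hfun :: "nat \<Rightarrow> (nat \<Rightarrow> real) \<Rightarrow> (nat \<Rightarrow> real) \<Rightarrow> real" where
  "Hfun n a x = vsum a x n"

text \<open>The implicit equations defining the Kahan map x |-> y (step size 2 eps).\<close>
definition kahan_rel :: "nat \<Rightarrow> (nat \<Rightarrow> real) \<Rightarrow> real \<Rightarrow> (nat \<Rightarrow> real) \<Rightarrow> (nat \<Rightarrow> real) \<Rightarrow> bool" where
  "kahan_rel n a eps x y \<longleftrightarrow>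
     (\<forall>i\<in>{1..n}. y i - x i =
        eps * x i * (Hfun n a x - vsum a y i - vsum a y (i - 1))
      + eps * y i * (Hfun n a x - vsum a x i - vsum a x (i - 1)))"

text \<open>y is the image of x under the Kahan map: y solves the implicit equations
and the solution is unique (the map is well defined at x).\<close>
definition is_kahan_image :: "nat \<Rightarrow> (nat \<Rightarrow> real) \<Rightarrow> real \<Rightarrow> (nat \<Rightarrow> real) \<Rightarrow> (nat \<Rightarrow> real) \<Rightarrow> bool" where
  "is_kahan_image n a eps x y \<longleftrightarrow>
     kahan_rel n a eps x y \<and>
     (\<forall>z. kahan_rel n a eps x z \<longrightarrow> (\<forall>i\<in>{1..n}. z i = y i))"

end

theory Submission
  imports Defs
begin

lemma vsum_Suc: "vsum a x (Suc j) = vsum a x j + a (Suc j) * x (Suc j)"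
  unfolding vsum_def by simp

lemma vsum_0: "vsum a x 0 = 0"
  unfolding vsum_def by simp

lemma key:
  assumes R: "kahan_rel n a eps x y" and j: "j \<le> n"
  shows "vsum a y j * (1 - eps * Hfun n a x + 2 * eps * vsum a x j)
         = vsum a x j * (1 + eps * Hfun n a x)"
  using j
proof (induction j)
  case 0 then show ?case by (simp add: vsum_0)
next
  case (Suc j)
  define H where "H = Hfun n a x"
  define V where "V = vsum a x j"
  define W where "W = vsum a y j"
  have IH: "W * (1 - eps * H + 2 * eps * V) = V * (1 + eps * H)"
    using Suc by (simp add: H_def V_def W_def)
  have "Suc j \<in> {1..n}" using Suc.prems by simp
  with R have E: "y (Suc j) - x (Suc j) =
        eps * x (Suc j) * (H - vsum a y (Suc j) - vsum a y j)
      + eps * y (Suc j) * (H - vsum a x (Suc j) - vsum a x j)"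
    unfolding kahan_rel_def H_def by auto
  have E2: "a (Suc j) * y (Suc j) * (1 - eps * H + 2 * eps * (V + a (Suc j) * x (Suc j)))
     = a (Suc j) * x (Suc j) * (1 + eps * H - 2 * eps * W)"
  proof -
    have "y (Suc j) - x (Suc j) =
        eps * x (Suc j) * (H - (W + a (Suc j) * y (Suc j)) - W)
      + eps * y (Suc j) * (H - (V + a (Suc j) * x (Suc j)) - V)"
      using E by (simp add: vsum_Suc V_def W_def)
    then have "a (Suc j) * (y (Suc j) - x (Suc j)) = a (Suc j) * (
        eps * x (Suc j) * (H - (W + a (Suc j) * y (Suc j)) - W)
      + eps * y (Suc j) * (H - (V + a (Suc j) * x (Suc j)) - V))" by simp
    then show ?thesis by (simp add: algebra_simps)
  qed
  show ?case
    unfolding vsum_Suc H_def[symmetric] V_def[symmetric] W_def[symmetric]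
    using IH E2 by (simp add: algebra_simps)
qed

theorem mainTheorem7:
  fixes n :: nat and a x y :: "nat \<Rightarrow> real" and eps :: real
  assumes a_nz: "\<exists>i\<in>{1..n}. a i \<noteq> 0"
    and K: "is_kahan_image n a eps x y"
  shows "(\<forall>j\<in>{1..n}.
            1 - eps * Hfun n a x + 2 * eps * vsum a x j \<noteq> 0 \<longrightarrow>
            vsum a y j = vsum a x j * (1 + eps * Hfun n a x)
                           / (1 - eps * Hfun n a x + 2 * eps * vsum a x j))
         \<and> Hfun n a y = Hfun n a x"
proof
  have R: "kahan_rel n a eps x y" using K unfolding is_kahan_image_def by simp
  show "\<forall>j\<in>{1..n}.
            1 - eps * Hfun n a x + 2 * eps * vsum a x j \<noteq> 0 \<longrightarrow>
            vsum a y j = vsum a x j * (1 + eps * Hfun n a x)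
                           / (1 - eps * Hfun n a x + 2 * eps * vsum a x j)"
    using key[OF R] by (simp add: eq_divide_eq)
  define H where "H = Hfun n a x"
  have n1: "n \<ge> 1" using a_nz by auto
  then obtain m where m: "n = Suc m" by (cases n) auto
  have kn: "vsum a y n * (1 + eps * H) = H * (1 + eps * H)"
    using key[OF R, of n] by (simp add: H_def Hfun_def algebra_simps)
  show "Hfun n a y = Hfun n a x"
  proof (cases "1 + eps * H = 0")
    case False
    then show ?thesis using kn by (simp add: H_def Hfun_def)
  next
    case True
    note T0 = True
    define z where "z = y(n := y n + 1)"
    have vz: "vsum a z i = vsum a y i" if "i < n" for i
      unfolding vsum_def z_def using that by (intro sum.cong) auto
    have "kahan_rel n a eps x z"
      unfolding kahan_rel_def
    proof
      fix i assume i: "i \<in> {1..n}"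
      show "z i - x i = eps * x i * (Hfun n a x - vsum a z i - vsum a z (i - 1))
         + eps * z i * (Hfun n a x - vsum a x i - vsum a x (i - 1))"
      proof (cases "i = n")
        case False
        then have "i < n" using i by auto
        then show ?thesis using R i vz[of i] vz[of "i - 1"] False
          unfolding kahan_rel_def z_def by auto
      next
        case True
        have Ey: "y n - x n = eps * x n * (H - vsum a y n - vsum a y m)
           + eps * y n * (H - vsum a x n - vsum a x m)"
          using R n1 m unfolding kahan_rel_def H_def by auto
        have zn: "vsum a z n = vsum a y n + a n"
          unfolding m vsum_Suc using vz[of m] m by (simp add: z_def algebra_simps)
        have d: "1 - eps * H + 2 * eps * vsum a x n = 0"
          using T0 by (simp add: H_def Hfun_def algebra_simps)
        have "z n - x n = eps * x n * (H - vsum a z n - vsum a z m)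
           + eps * z n * (H - vsum a x n - vsum a x m)"
          using Ey zn vz[of m] m d unfolding vsum_Suc[of a x m, folded m]
          by (simp add: z_def algebra_simps)
        then show ?thesis using True m by (simp add: H_def)
      qed
    qed
    then have "z n = y n" using K n1 unfolding is_kahan_image_def by auto
    then show ?thesis by (simp add: z_def)
  qed
qed

end
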